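(* Let $n\ge1$ and let $p=p_1\cdots p_{n-1}1$ be a strongly 312-avoiding permutation of $\{1,\dots,n\}$ ending in the entry $1$. Then the smallest $\lceil n/2\rceil$ entries of $p$ occupy the last $\lceil n/2\rceil$ positions in decreasing order; that is, $p_{n-j+1}=j$ for all $j=1,\dots,\lceil n/2\rceil$.
   Context: Permutations are written in one-line notation $p=p_1\cdots p_n$ with $p_i=p(i)$. $p$ contains a pattern $q=q_1\cdots q_m$ if there are indices $i_1<\cdots<i_m$ with $p_{i_r}<p_{i_s}$ iff $q_r<q_s$; otherwise $p$ avoids $q$. $p^2(i)=p(p(i))$. A permutation $p$ is strongly $q$-avoiding if both $p$ and $p^2$ avoid $q$. *)

theory Defs
  imports "HOL-Combinatorics.Permutations"
begin

text \<open>Permutations of {1..n} are functions nat => nat with  p permutes {1..n};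
  one-line notation p_i = p i.  A pattern q of length m is given as a list
  (one-line notation of a permutation of {1..m}).\<close>

definition contains_pattern :: "nat \<Rightarrow> (nat \<Rightarrow> nat) \<Rightarrow> nat list \<Rightarrow> bool" where
  "contains_pattern n p q \<longleftrightarrow>
     (\<exists>ix :: nat \<Rightarrow> nat.
        (\<forall>r < length q. ix r \<in> {1..n}) \<and>
        (\<forall>r s. r < s \<and> s < length q \<longrightarrow> ix r < ix s) \<and>
        (\<forall>r < length q. \<forall>s < length q. (p (ix r) < p (ix s) \<longleftrightarrow> q ! r < q ! s)))"

definition avoids_pattern :: "nat \<Rightarrow> (nat \<Rightarrow> nat) \<Rightarrow> nat list \<Rightarrow> bool" where
  "avoids_pattern n p q \<longleftrightarrow> \<not> contains_pattern n p q"

definition strongly_avoiding :: "nat \<Rightarrow> (nat \<Rightarrow> nat) \<Rightarrow> nat list \<Rightarrow> bool" where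
  "strongly_avoiding n p q \<longleftrightarrow> avoids_pattern n p q \<and> avoids_pattern n (p \<circ> p) q"

end

theory Submission
  imports Defs
begin

lemma pat312:
  fixes f :: "nat \<Rightarrow> nat"
  assumes "1 \<le> a" "a < b" "b < c" "c \<le> n" "f b < f c" "f c < f a"
  shows "contains_pattern n f [3,1,2]"
  unfolding contains_pattern_def
proof (intro exI[of _ "\<lambda>r. if r = 0 then a else if r = 1 then b else c"] conjI allI impI)
  fix r assume "r < length [3::nat,1,2]"
  then have "r = 0 \<or> r = 1 \<or> r = 2" by auto
  then show "(if r = 0 then a else if r = 1 then b else c) \<in> {1..n}" using assms by auto
next
  fix r s assume "r < s \<and> s < length [3::nat,1,2]"
  then have "(r = 0 \<and> s = 1) \<or> (r = 0 \<and> s = 2) \<or> (r = 1 \<and> s = 2)" by auto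
  then show "(if r = 0 then a else if r = 1 then b else c) < (if s = 0 then a else if s = 1 then b else c)"
    using assms by auto
next
  fix r s assume "r < length [3::nat,1,2]" "s < length [3::nat,1,2]"
  then have "r = 0 \<or> r = 1 \<or> r = 2" "s = 0 \<or> s = 1 \<or> s = 2" by auto
  then show "(f (if r = 0 then a else if r = 1 then b else c) < f (if s = 0 then a else if s = 1 then b else c))
        = ([3::nat,1,2] ! r < [3,1,2] ! s)"
    using assms by auto
qed

lemma step:
  fixes n :: nat and p :: "nat \<Rightarrow> nat"
  assumes perm: "p permutes {1..n}"
    and av1: "\<not> contains_pattern n p [3,1,2]"
    and av2: "\<not> contains_pattern n (p \<circ> p) [3,1,2]"
    and pn: "p n = 1"
    and j2: "2 \<le> j" and jn: "j \<le> (n + 1) div 2"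
    and IH: "\<And>i. 1 \<le> i \<Longrightarrow> i < j \<Longrightarrow> p (n - i + 1) = i"
  shows "p (n - j + 1) = j"
proof -
  define k where "k = n - j + 1"
  have n3: "n \<ge> 3" using j2 jn by linarith
  have kj: "j \<le> k" "k < n" "2 \<le> k" using j2 jn n3 unfolding k_def by linarith+
  have inj: "inj p" using perm by (rule permutes_inj)
  have img: "\<And>q. q \<in> {1..n} \<Longrightarrow> p q \<in> {1..n}" by (rule permutes_in_image[OF perm, THEN iffD2])
  have surj: "\<And>w. w \<in> {1..n} \<Longrightarrow> \<exists>q\<in>{1..n}. p q = w"
    using permutes_image[OF perm] by (metis imageE)
  have F1a: "p q \<ge> j" if "1 \<le> q" "q \<le> k" for q
  proof (rule ccontr)
    assume "\<not> p q \<ge> j"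
    moreover have "p q \<ge> 1" using img[of q] that kj by auto
    ultimately have "p (n - p q + 1) = p q" by (intro IH) auto
    then have "n - p q + 1 = q" using inj by (simp add: inj_eq)
    then show False using \<open>\<not> p q \<ge> j\<close> that kj unfolding k_def by linarith
  qed
  have F1b: "q \<le> k" if "1 \<le> q" "q \<le> n" "p q \<ge> j" for q
  proof (rule ccontr)
    assume "\<not> q \<le> k"
    then have "p (n - (n - q + 1) + 1) = n - q + 1" using that unfolding k_def by (intro IH) linarith+
    moreover have "n - (n - q + 1) + 1 = q" using that by auto
    ultimately show False using that \<open>\<not> q \<le> k\<close> unfolding k_def by auto
  qed
  obtain m where m: "m \<in> {1..n}" "p m = j" using surj[of j] kj j2 by auto
  have mk: "m \<le> k" using F1b m by auto
  show ?thesis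
  proof (rule ccontr)
    assume ne: "p (n - j + 1) \<noteq> j"
    have "m \<noteq> k" using ne m(2) unfolding k_def by metis
    then have mk2: "m < k" using mk by simp
    obtain t where t: "t \<in> {1..n}" "p t = n" using surj[of n] n3 by auto
    have tk: "t \<le> k" using F1b t kj by auto
    have gtj: "p q > j" if "1 \<le> q" "q \<le> k" "q \<noteq> m" for q
    proof -
      have "p q \<noteq> p m" using inj that by (simp add: inj_eq)
      then show ?thesis using F1a[OF that(1,2)] m by auto
    qed
    have F4: "p a < p b" if "1 \<le> a" "a < m" "m < b" "b \<le> k" for a b
    proof (rule ccontr)
      assume "\<not> p a < p b"
      moreover have "p a \<noteq> p b" using inj that by (simp add: inj_eq)
      ultimately have "p b < p a" by auto
      moreover have "p m < p b" using gtj[of b] that m by auto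
      ultimately have "contains_pattern n p [3,1,2]"
        using pat312[of a m b n p] that kj by auto
      then show False using av1 by simp
    qed
    have tm: "t \<noteq> m" using t m kj by auto
    have mt: "m < t"
    proof (rule ccontr)
      assume "\<not> m < t"
      then have "t < m" using tm by auto
      have "k \<noteq> t" using \<open>t < m\<close> mk2 by auto
      have "p k \<noteq> n" using inj \<open>k \<noteq> t\<close> t by (metis inj_eq)
      moreover have "p k \<le> n" using img[of k] kj by auto
      moreover have "p m < p k" using gtj[of k] m kj mk2 by auto
      ultimately have "contains_pattern n p [3,1,2]"
        using pat312[of t m k n p] \<open>t < m\<close> mk2 kj t by auto
      then show False using av1 by simp
    qed
    have pt2: "(p \<circ> p) t = 1" using t pn by simp
    have pn2: "(p \<circ> p) n = p 1" using pn by simp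
    show False
    proof (cases "m = 1")
      case True
      have "p 1 = j" using m True by simp
      have "p j > j" using gtj[of j] kj j2 True by auto
      then have "contains_pattern n (p \<circ> p) [3,1,2]"
        using pat312[of 1 t n n "p \<circ> p"] True mt tk kj pt2 pn2 \<open>p 1 = j\<close> j2 by auto
      then show False using av2 by simp
    next
      case False
      then have m2: "m \<ge> 2" using m by auto
      have p1: "p 1 > 1" using F1a[of 1] kj j2 by auto
      have "\<exists>a. 1 \<le> a \<and> a < t \<and> p (p a) > p 1"
      proof (cases "j > m")
        case True
        have "p 1 < p j" using F4[of 1 j] m2 True kj by auto
        then show ?thesis using m mt by auto
      next
        case False
        obtain b where b: "b \<in> {1..n}" "p b = m + 1" using surj[of "m+1"] mk2 kj by auto
        have bk: "b \<le> k" using F1b b False by auto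
        have "p 1 < p (m + 1)" using F4[of 1 "m+1"] m2 mk2 by auto
        show ?thesis
        proof (cases "b < t")
          case True
          then show ?thesis using b \<open>p 1 < p (m + 1)\<close> by auto
        next
          case bt: False
          have "b \<noteq> t" using b t mk2 kj by auto
          then have "b > m" using bt mt by auto
          have sub: "p ` {1..<m} \<subseteq> {j+1..m}"
          proof
            fix y assume "y \<in> p ` {1..<m}"
            then obtain a where a: "a \<in> {1..<m}" "y = p a" by auto
            have "p a < m + 1" using F4[of a b] a \<open>b > m\<close> bk b by auto
            moreover have "p a > j" using gtj[of a] a mk2 by auto
            ultimately show "y \<in> {j+1..m}" using a by auto
          qed
          have "inj_on p {1..<m}" using inj_on_subset[OF inj] by blast
          then have "card (p ` {1..<m}) = m - 1" by (simp add: card_image)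
          moreover have "card (p ` {1..<m}) \<le> card {j+1..m}"
            using sub by (intro card_mono) auto
          ultimately have "m - 1 \<le> m - j" by simp
          then have False using j2 m2 by linarith
          then show ?thesis ..
        qed
      qed
      then obtain a where a: "1 \<le> a" "a < t" "p (p a) > p 1" by blast
      have "contains_pattern n (p \<circ> p) [3,1,2]"
        using pat312[of a t n n "p \<circ> p"] a tk kj pt2 pn2 p1 by auto
      then show False using av2 by simp
    qed
  qed
qed

theorem lemma3p4:
  fixes n :: nat and p :: "nat \<Rightarrow> nat"
  assumes "n \<ge> 1"
    and "p permutes {1..n}"
    and "strongly_avoiding n p [3,1,2]"
    and "p n = 1"
  shows "\<forall>j \<in> {1..(n + 1) div 2}. p (n - j + 1) = j"
proof -
  have av1: "\<not> contains_pattern n p [3,1,2]" and av2: "\<not> contains_pattern n (p \<circ> p) [3,1,2]"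
    using assms(3) unfolding strongly_avoiding_def avoids_pattern_def by auto
  have "\<And>j. 1 \<le> j \<longrightarrow> j \<le> (n + 1) div 2 \<longrightarrow> p (n - j + 1) = j"
  proof -
    fix j show "1 \<le> j \<longrightarrow> j \<le> (n + 1) div 2 \<longrightarrow> p (n - j + 1) = j"
    proof (induction j rule: less_induct)
      case (less j)
      show ?case
      proof (intro impI)
        assume "1 \<le> j" "j \<le> (n + 1) div 2"
        show "p (n - j + 1) = j"
        proof (cases "j = 1")
          case True then show ?thesis using assms by simp
        next
          case False
          show ?thesis
            by (rule step[OF assms(2) av1 av2 assms(4)]) (use False \<open>1 \<le> j\<close> \<open>j \<le> (n + 1) div 2\<close> less in auto)
        qed
      qed
    qed
  qed
  then show ?thesis by auto
qed

end
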